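(* If the dataset is balanced, i.e. $s_{N+1}=s_1$, then for every $\theta\in\mathbb R^d$, $$w(\theta)\le 2f_d(\theta).$$
   Context: Finite-sample setting. Let $\mathcal S$ be a finite state space, $\phi:\mathcal S\to\mathbb R^d$ a feature map with $\|\phi(s)\|_2\le 1$ for all $s$, $r:\mathcal S\times\mathcal S\to\mathbb R$ a reward function and $\gamma\in[0,1)$. For a pair of states $(s,s')$ and $\theta\in\mathbb R^d$ let $g_{s,s'}(\theta)=(r(s,s')+\gamma\phi(s')^T\theta-\phi(s)^T\theta)\phi(s)$. A dataset is a state trajectory $s_1,\dots,s_{N+1}$, giving the $N$ pairs $(s_t,s_{t+1})$, $t=1,\dots,N$. Let $A_d=\frac1N\sum_{t=1}^N\phi(s_t)(\phi(s_t)-\gamma\phi(s_{t+1}))^T$ and $b_d=\frac1N\sum_{t=1}^N r(s_t,s_{t+1})\phi(s_t)$. Assume $A_d$ is nonsingular and let $\theta^*=A_d^{-1}b_d$. Define $f_d(\theta)=(\theta-\theta^* )^TA_d(\theta-\theta^* )$ and $w(\theta)=\frac1N\sum_{t=1}^N\|g_{s_t,s_{t+1}}(\theta)-g_{s_t,s_{t+1}}(\theta^* )\|^2$. *)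

theory Defs
  imports "HOL-Analysis.Analysis"
begin

definition td_g :: "('s \<Rightarrow> real^'d) \<Rightarrow> ('s \<Rightarrow> 's \<Rightarrow> real) \<Rightarrow> real \<Rightarrow> 's \<Rightarrow> 's \<Rightarrow> real^'d \<Rightarrow> real^'d" where
  "td_g \<phi> r \<gamma> x x' \<theta> = (r x x' + \<gamma> * (\<phi> x' \<bullet> \<theta>) - \<phi> x \<bullet> \<theta>) *\<^sub>R \<phi> x"

definition td_A :: "('s \<Rightarrow> real^'d) \<Rightarrow> real \<Rightarrow> (nat \<Rightarrow> 's) \<Rightarrow> nat \<Rightarrow> real^'d^'d" where
  "td_A \<phi> \<gamma> s N = (\<chi> i j. (1 / real N) *
     (\<Sum>t=1..N. (\<phi> (s t) $ i) * ((\<phi> (s t) - \<gamma> *\<^sub>R \<phi> (s (t+1))) $ j)))"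

definition td_b :: "('s \<Rightarrow> real^'d) \<Rightarrow> ('s \<Rightarrow> 's \<Rightarrow> real) \<Rightarrow> (nat \<Rightarrow> 's) \<Rightarrow> nat \<Rightarrow> real^'d" where
  "td_b \<phi> r s N = (1 / real N) *\<^sub>R (\<Sum>t=1..N. r (s t) (s (t+1)) *\<^sub>R \<phi> (s t))"

definition td_theta_star :: "('s \<Rightarrow> real^'d) \<Rightarrow> ('s \<Rightarrow> 's \<Rightarrow> real) \<Rightarrow> real \<Rightarrow> (nat \<Rightarrow> 's) \<Rightarrow> nat \<Rightarrow> real^'d" where
  "td_theta_star \<phi> r \<gamma> s N = matrix_inv (td_A \<phi> \<gamma> s N) *v td_b \<phi> r s N"

definition td_f :: "('s \<Rightarrow> real^'d) \<Rightarrow> ('s \<Rightarrow> 's \<Rightarrow> real) \<Rightarrow> real \<Rightarrow> (nat \<Rightarrow> 's) \<Rightarrow> nat \<Rightarrow> real^'d \<Rightarrow> real" where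
  "td_f \<phi> r \<gamma> s N \<theta> = (let \<delta> = \<theta> - td_theta_star \<phi> r \<gamma> s N in \<delta> \<bullet> (td_A \<phi> \<gamma> s N *v \<delta>))"

definition td_w :: "('s \<Rightarrow> real^'d) \<Rightarrow> ('s \<Rightarrow> 's \<Rightarrow> real) \<Rightarrow> real \<Rightarrow> (nat \<Rightarrow> 's) \<Rightarrow> nat \<Rightarrow> real^'d \<Rightarrow> real" where
  "td_w \<phi> r \<gamma> s N \<theta> = (1 / real N) * (\<Sum>t=1..N.
     (norm (td_g \<phi> r \<gamma> (s t) (s (t+1)) \<theta> - td_g \<phi> r \<gamma> (s t) (s (t+1)) (td_theta_star \<phi> r \<gamma> s N)))\<^sup>2)"

end

theory Submission
  imports Defs
begin

theorem mainTheorem5: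
  fixes \<phi> :: "'s::finite \<Rightarrow> real^'d"
    and r :: "'s \<Rightarrow> 's \<Rightarrow> real"
    and \<gamma> :: real
    and s :: "nat \<Rightarrow> 's"
    and N :: nat
    and \<theta> :: "real^'d"
  assumes phi_bound: "\<And>x. norm (\<phi> x) \<le> 1"
    and gamma: "0 \<le> \<gamma>" "\<gamma> < 1"
    and N_pos: "N \<ge> 1"
    and nonsing: "invertible (td_A \<phi> \<gamma> s N)"
    and balanced: "s (N + 1) = s 1"
  shows "td_w \<phi> r \<gamma> s N \<theta> \<le> 2 * td_f \<phi> r \<gamma> s N \<theta>"
proof -
  define ts where "ts = td_theta_star \<phi> r \<gamma> s N"
  define \<delta> where "\<delta> = \<theta> - ts"
  define a where "a t = \<phi> (s t) \<bullet> \<delta>" for t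
  have Av: "td_A \<phi> \<gamma> s N *v \<delta> = (1/real N) *\<^sub>R (\<Sum>t=1..N. ((\<phi>(s t) - \<gamma> *\<^sub>R \<phi>(s(t+1))) \<bullet> \<delta>) *\<^sub>R \<phi>(s t))"
    unfolding td_A_def
    by (simp add: vec_eq_iff matrix_vector_mult_def inner_vec_def sum_distrib_left
        sum_distrib_right mult.assoc mult.left_commute sum_component)
      (subst sum.swap, simp add: mult_ac)
  have f: "td_f \<phi> r \<gamma> s N \<theta> = (1/real N) * (\<Sum>t=1..N. a t * (a t - \<gamma> * a (t+1)))"
    unfolding td_f_def Let_def ts_def[symmetric] \<delta>_def[symmetric] Av
    by (simp add: inner_sum_right inner_diff_left inner_diff_right a_def inner_commute mult.commute)
  have wt: "(norm (td_g \<phi> r \<gamma> (s t) (s (t+1)) \<theta> - td_g \<phi> r \<gamma> (s t) (s (t+1)) ts))\<^sup>2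
      \<le> (a t - \<gamma> * a (t+1))\<^sup>2" for t
  proof -
    have "td_g \<phi> r \<gamma> (s t) (s (t+1)) \<theta> - td_g \<phi> r \<gamma> (s t) (s (t+1)) ts
       = (\<gamma> * a (t+1) - a t) *\<^sub>R \<phi> (s t)"
      unfolding td_g_def a_def \<delta>_def
      by (simp add: algebra_simps inner_diff_right)
    hence "(norm (td_g \<phi> r \<gamma> (s t) (s (t+1)) \<theta> - td_g \<phi> r \<gamma> (s t) (s (t+1)) ts))\<^sup>2
       = (a t - \<gamma> * a (t+1))\<^sup>2 * (norm (\<phi> (s t)))\<^sup>2"
      by (simp add: power_mult_distrib power2_commute)
    also have "\<dots> \<le> (a t - \<gamma> * a (t+1))\<^sup>2 * 1"
      using phi_bound[of "s t"] by (intro mult_left_mono) (auto simp: power_le_one)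
    finally show ?thesis by simp
  qed
  have w: "td_w \<phi> r \<gamma> s N \<theta> \<le> (1/real N) * (\<Sum>t=1..N. (a t - \<gamma> * a (t+1))\<^sup>2)"
    unfolding td_w_def ts_def[symmetric]
    by (intro mult_left_mono sum_mono wt) auto
  have shift: "(\<Sum>t=1..N. (a (t+1))\<^sup>2) = (\<Sum>t=1..N. (a t)\<^sup>2)"
  proof -
    have aN: "a (N+1) = a 1" using balanced by (simp add: a_def)
    obtain M where M: "N = Suc M" using N_pos by (cases N) auto
    have "(\<Sum>t=1..N. (a (t+1))\<^sup>2) = (\<Sum>t=Suc 1..Suc N. (a t)\<^sup>2)"
      by (subst sum.shift_bounds_cl_Suc_ivl) (simp add: o_def)
    also have "\<dots> = (\<Sum>t=Suc 1..N. (a t)\<^sup>2) + (a (Suc N))\<^sup>2"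
      using N_pos by (subst sum.cl_ivl_Suc) simp
    also have "\<dots> = (\<Sum>t=1..N. (a t)\<^sup>2)"
      using N_pos aN by (subst sum.atLeast_Suc_atMost[of 1 N]) simp_all
    finally show ?thesis .
  qed
  have key: "(\<Sum>t=1..N. (a t - \<gamma> * a (t+1))\<^sup>2) \<le> 2 * (\<Sum>t=1..N. a t * (a t - \<gamma> * a (t+1)))"
  proof -
    have e: "(\<Sum>t=1..N. (a t - \<gamma> * a (t+1))\<^sup>2) = 2 * (\<Sum>t=1..N. a t * (a t - \<gamma> * a (t+1)))
        - (\<Sum>t=1..N. (a t)\<^sup>2) + \<gamma>\<^sup>2 * (\<Sum>t=1..N. (a (t+1))\<^sup>2)"
      by (simp add: sum_distrib_left sum_subtractf[symmetric] sum.distrib[symmetric] power2_eq_square algebra_simps)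
    have "\<gamma>\<^sup>2 \<le> 1" using gamma by (simp add: power_le_one)
    moreover have "0 \<le> (\<Sum>t=1..N. (a t)\<^sup>2)" by (simp add: sum_nonneg)
    ultimately have "\<gamma>\<^sup>2 * (\<Sum>t=1..N. (a t)\<^sup>2) \<le> (\<Sum>t=1..N. (a t)\<^sup>2)"
      by (simp add: mult_left_le_one_le)
    thus ?thesis unfolding e shift by linarith
  qed
  have "(1/real N) * (\<Sum>t=1..N. (a t - \<gamma> * a (t+1))\<^sup>2) \<le> (1/real N) * (2 * (\<Sum>t=1..N. a t * (a t - \<gamma> * a (t+1))))"
    by (intro mult_left_mono key) auto
  thus ?thesis using w f by simp
qed

end
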